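(* Let $G$ be a finite simple connected graph with at least one edge, let $W$ be a minimal vertex cover of $G$, and let $s\ge 0$. Then the ideal $\mathfrak p=\langle\mathcal{J}_s(W)\rangle\subseteq\mathcal{J}_s(R)$ is a minimal prime of $\mathcal{J}_s(I(G))$, and the $\mathfrak p$-primary component of $\mathcal{J}_s(I(G))$ is $\mathfrak p$ itself.
   Context: $R=k[x_1,\dots,x_n]$ over a field $k$, with the vertices of $G$ identified with the variables. The edge ideal is $I(G)=\langle x_ix_j : \{x_i,x_j\}\in E(G)\rangle$. A vertex cover is a set of vertices meeting every edge; minimal if no proper subset is a vertex cover. $\mathcal{J}_s(R)=k[x_i^{(l)} : 1\le i\le n,\ 0\le l\le s]$. For $I=\langle f_1,\dots,f_r\rangle\subseteq R$, write $f_m(x_1^{(0)}+x_1^{(1)}t+\cdots+x_1^{(s)}t^s,\dots)\equiv\sum_{l=0}^s\alpha_m^{(l)}t^l \pmod{t^{s+1}}$; then $\mathcal{J}_s(I)=\langle\alpha_m^{(l)}\rangle\subseteq\mathcal{J}_s(R)$. For $W\subseteq V(G)$, $\mathcal{J}_s(W)=\{x^{(j)} : x\in W,\ 0\le j\le s\}$. *)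

theory Defs
  imports "HOL-Library.Poly_Mapping" "HOL-Computational_Algebra.Polynomial"
begin

type_synonym ('a, 'k) mpoly = "('a \<Rightarrow>\<^sub>0 nat) \<Rightarrow>\<^sub>0 'k"

definition Var :: "'a \<Rightarrow> ('a, 'k::comm_ring_1) mpoly" where
  "Var x = Poly_Mapping.single (Poly_Mapping.single x 1) 1"

definition Const :: "'k \<Rightarrow> ('a, 'k::comm_ring_1) mpoly" where
  "Const c = Poly_Mapping.single 0 c"

definition vars :: "('a, 'k::comm_ring_1) mpoly \<Rightarrow> 'a set" where
  "vars p = \<Union> (Poly_Mapping.keys ` Poly_Mapping.keys p)"

definition poly_ring :: "'a set \<Rightarrow> ('a, 'k::comm_ring_1) mpoly set" where
  "poly_ring A = {p. vars p \<subseteq> A}"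

definition ideal_gen :: "'a set \<Rightarrow> ('a, 'k::comm_ring_1) mpoly set \<Rightarrow> ('a, 'k) mpoly set" where
  "ideal_gen A S = {(\<Sum>g\<in>F. c g * g) | F c. finite F \<and> F \<subseteq> S \<and> (\<forall>g\<in>F. c g \<in> poly_ring A)}"

definition is_ideal :: "'a set \<Rightarrow> ('a, 'k::comm_ring_1) mpoly set \<Rightarrow> bool" where
  "is_ideal A I \<longleftrightarrow> I \<subseteq> poly_ring A \<and> 0 \<in> I \<and> (\<forall>x\<in>I. \<forall>y\<in>I. x + y \<in> I)
     \<and> (\<forall>r\<in>poly_ring A. \<forall>x\<in>I. r * x \<in> I)"

definition prime_ideal :: "'a set \<Rightarrow> ('a, 'k::comm_ring_1) mpoly set \<Rightarrow> bool" where
  "prime_ideal A P \<longleftrightarrow> is_ideal A P \<and> P \<noteq> poly_ring A \<and>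
     (\<forall>a\<in>poly_ring A. \<forall>b\<in>poly_ring A. a * b \<in> P \<longrightarrow> a \<in> P \<or> b \<in> P)"

definition minimal_prime :: "'a set \<Rightarrow> ('a, 'k::comm_ring_1) mpoly set \<Rightarrow> ('a, 'k) mpoly set \<Rightarrow> bool" where
  "minimal_prime A I P \<longleftrightarrow> prime_ideal A P \<and> I \<subseteq> P \<and>
     (\<forall>Q. prime_ideal A Q \<and> I \<subseteq> Q \<and> Q \<subseteq> P \<longrightarrow> Q = P)"

text \<open>For a minimal prime P of I, the P-primary component of I (uniquely determined, the
  same in every primary decomposition) is the contraction of I R_P to R, i.e. the kernel of
  R \<rightarrow> R_P / I R_P.\<close>
definition primary_component :: "'a set \<Rightarrow> ('a, 'k::comm_ring_1) mpoly set \<Rightarrow> ('a, 'k) mpoly set \<Rightarrow> ('a, 'k) mpoly set" where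
  "primary_component A I P = {f \<in> poly_ring A. \<exists>g\<in>poly_ring A - P. g * f \<in> I}"

text \<open>Jet variables x_i^(l) are pairs (i, l). The substitution
  x_i \<mapsto> x_i^(0) + x_i^(1) t + ... + x_i^(s) t^s, as a polynomial in t.\<close>
definition jet_subst :: "nat \<Rightarrow> ('a, 'k::comm_ring_1) mpoly \<Rightarrow> ('a \<times> nat, 'k) mpoly poly" where
  "jet_subst s f = (\<Sum>m\<in>Poly_Mapping.keys f.
      [:Const (Poly_Mapping.lookup f m):] *
      (\<Prod>i\<in>Poly_Mapping.keys m. (\<Sum>l\<le>s. monom (Var (i, l)) l) ^ (Poly_Mapping.lookup m i)))"

text \<open>J_s(R) for R = k[x_v : v in V].\<close>
definition jet_vars :: "nat \<Rightarrow> 'a set \<Rightarrow> ('a \<times> nat) set" where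
  "jet_vars s V = V \<times> {0..s}"

definition jet_ideal :: "nat \<Rightarrow> 'a set \<Rightarrow> ('a, 'k::comm_ring_1) mpoly set \<Rightarrow> ('a \<times> nat, 'k) mpoly set" where
  "jet_ideal s V gens = ideal_gen (jet_vars s V) {coeff (jet_subst s f) l | f l. f \<in> gens \<and> l \<le> s}"

definition jet_set :: "nat \<Rightarrow> 'a set \<Rightarrow> ('a \<times> nat, 'k::comm_ring_1) mpoly set" where
  "jet_set s W = {Var (x, j) | x j. x \<in> W \<and> j \<le> s}"

definition simple_graph :: "'a set \<Rightarrow> 'a set set \<Rightarrow> bool" where
  "simple_graph V E \<longleftrightarrow> finite V \<and> (\<forall>e\<in>E. e \<subseteq> V \<and> card e = 2)"

definition connected_graph :: "'a set \<Rightarrow> 'a set set \<Rightarrow> bool" where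
  "connected_graph V E \<longleftrightarrow>
     (\<forall>u\<in>V. \<forall>v\<in>V. (\<lambda>x y. {x, y} \<in> E)\<^sup>*\<^sup>* u v)"

definition edge_ideal_gens :: "'a set set \<Rightarrow> ('a, 'k::comm_ring_1) mpoly set" where
  "edge_ideal_gens E = {Var x * Var y | x y. {x, y} \<in> E \<and> x \<noteq> y}"

definition edge_ideal :: "'a set \<Rightarrow> 'a set set \<Rightarrow> ('a, 'k::comm_ring_1) mpoly set" where
  "edge_ideal V E = ideal_gen V (edge_ideal_gens E)"

definition vertex_cover :: "'a set \<Rightarrow> 'a set set \<Rightarrow> 'a set \<Rightarrow> bool" where
  "vertex_cover V E W \<longleftrightarrow> W \<subseteq> V \<and> (\<forall>e\<in>E. e \<inter> W \<noteq> {})"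

definition minimal_vertex_cover :: "'a set \<Rightarrow> 'a set set \<Rightarrow> 'a set \<Rightarrow> bool" where
  "minimal_vertex_cover V E W \<longleftrightarrow> vertex_cover V E W \<and> (\<forall>W'. W' \<subset> W \<longrightarrow> \<not> vertex_cover V E W')"

end

theory Submission
  imports Defs
begin


lemma vars_add: "vars (p + q) \<subseteq> vars p \<union> vars q"
  unfolding vars_def using keys_add[of p q] by auto

lemma vars_mult: "vars (p * q) \<subseteq> vars p \<union> vars q"
proof
  fix x assume "x \<in> vars (p*q)"
  then obtain m where m: "m \<in> Poly_Mapping.keys (p*q)" "x \<in> Poly_Mapping.keys m" unfolding vars_def by blast
  then obtain a b where ab: "a \<in> Poly_Mapping.keys p" "b \<in> Poly_Mapping.keys q" "m = a + b" using keys_mult by blast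
  then have "x \<in> Poly_Mapping.keys a \<union> Poly_Mapping.keys b" using m keys_add[of a b] by auto
  then show "x \<in> vars p \<union> vars q" using ab unfolding vars_def by blast
qed

lemma vars_uminus[simp]: "vars (- p) = vars p"
  unfolding vars_def by simp

lemma vars_zero[simp]: "vars 0 = {}" unfolding vars_def by simp
lemma vars_one[simp]: "vars 1 = {}" unfolding vars_def by simp
lemma vars_single: "vars (Poly_Mapping.single m c) \<subseteq> Poly_Mapping.keys m" unfolding vars_def by simp
lemma vars_Var[simp]: "vars (Var x :: ('a,'k::comm_ring_1) mpoly) = {x}" unfolding vars_def Var_def by simp

lemma pr_add: "p \<in> poly_ring A \<Longrightarrow> q \<in> poly_ring A \<Longrightarrow> p + q \<in> poly_ring A"
  unfolding poly_ring_def using vars_add[of p q] by auto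
lemma pr_mult: "p \<in> poly_ring A \<Longrightarrow> q \<in> poly_ring A \<Longrightarrow> p * q \<in> poly_ring A"
  unfolding poly_ring_def using vars_mult[of p q] by auto
lemma pr_uminus: "p \<in> poly_ring A \<Longrightarrow> - p \<in> poly_ring A"
  unfolding poly_ring_def by simp
lemma pr_diff: "p \<in> poly_ring A \<Longrightarrow> q \<in> poly_ring A \<Longrightarrow> p - q \<in> poly_ring A"
  using pr_add pr_uminus by (metis diff_conv_add_uminus)
lemma pr_zero[simp]: "0 \<in> poly_ring A" unfolding poly_ring_def by simp
lemma pr_one[simp]: "1 \<in> poly_ring A" unfolding poly_ring_def by simp
lemma pr_Var: "x \<in> A \<Longrightarrow> Var x \<in> poly_ring A" unfolding poly_ring_def by simp
lemma pr_sum: "(\<And>i. i \<in> F \<Longrightarrow> f i \<in> poly_ring A) \<Longrightarrow> sum f F \<in> poly_ring A"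
  by (induction F rule: infinite_finite_induct) (auto intro: pr_add)
lemma pr_prod: "(\<And>i. i \<in> F \<Longrightarrow> f i \<in> poly_ring A) \<Longrightarrow> prod f F \<in> poly_ring A"
  by (induction F rule: infinite_finite_induct) (auto intro: pr_mult)
lemma pr_power: "p \<in> poly_ring A \<Longrightarrow> p ^ n \<in> poly_ring A"
  by (induction n) (auto intro: pr_mult)

lemma ideal_sum: "is_ideal A I \<Longrightarrow> (\<And>i. i \<in> F \<Longrightarrow> f i \<in> I) \<Longrightarrow> sum f F \<in> I"
  by (induction F rule: infinite_finite_induct) (auto simp: is_ideal_def)
lemma ideal_mult: "is_ideal A I \<Longrightarrow> r \<in> poly_ring A \<Longrightarrow> x \<in> I \<Longrightarrow> r * x \<in> I"
  by (auto simp: is_ideal_def)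
lemma ideal_mult2: "is_ideal A I \<Longrightarrow> r \<in> poly_ring A \<Longrightarrow> x \<in> I \<Longrightarrow> x * r \<in> I"
  by (auto simp: is_ideal_def mult.commute)
lemma ideal_add: "is_ideal A I \<Longrightarrow> x \<in> I \<Longrightarrow> y \<in> I \<Longrightarrow> x + y \<in> I"
  by (auto simp: is_ideal_def)
lemma ideal_diff: "is_ideal A I \<Longrightarrow> x \<in> I \<Longrightarrow> y \<in> I \<Longrightarrow> x - y \<in> I"
proof -
  assume a: "is_ideal A I" "x \<in> I" "y \<in> I"
  have "(-1) * y \<in> I" using a by (intro ideal_mult) (auto intro: pr_uminus)
  then show ?thesis using a ideal_add[of A I x "(-1)*y"] by simp
qed
lemma ideal_sub: "is_ideal A I \<Longrightarrow> I \<subseteq> poly_ring A" by (simp add: is_ideal_def)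

lemma ideal_gen_sub: "g \<in> S \<Longrightarrow> g \<in> ideal_gen A S"
  unfolding ideal_gen_def
  by (rule CollectI, rule exI[of _ "{g}"], rule exI[of _ "\<lambda>_. 1"]) auto

lemma ideal_gen_least: "is_ideal A I \<Longrightarrow> S \<subseteq> I \<Longrightarrow> ideal_gen A S \<subseteq> I"
  unfolding ideal_gen_def by (auto intro!: ideal_sum ideal_mult)


lemma ideal_gen_is_ideal:
  fixes S :: "('a,'k::comm_ring_1) mpoly set"
  assumes S: "S \<subseteq> poly_ring A"
  shows "is_ideal A (ideal_gen A S)"
  unfolding is_ideal_def
proof (intro conjI ballI)
  show "ideal_gen A S \<subseteq> poly_ring A"
    unfolding ideal_gen_def using S by (auto intro!: pr_sum pr_mult)
  show "0 \<in> ideal_gen A S" unfolding ideal_gen_def by (rule CollectI, rule exI[of _ "{}"]) auto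
next
  fix x y assume "x \<in> ideal_gen A S" "y \<in> ideal_gen A S"
  then obtain F1 c1 F2 c2 where 1: "x = (\<Sum>g\<in>F1. c1 g * g)" "finite F1" "F1 \<subseteq> S" "\<forall>g\<in>F1. c1 g \<in> poly_ring A"
    and 2: "y = (\<Sum>g\<in>F2. c2 g * g)" "finite F2" "F2 \<subseteq> S" "\<forall>g\<in>F2. c2 g \<in> poly_ring A"
    unfolding ideal_gen_def by blast
  define c where "c g = (if g \<in> F1 then c1 g else 0) + (if g \<in> F2 then c2 g else 0)" for g
  have "(\<Sum>g\<in>F1 \<union> F2. c g * g) = (\<Sum>g\<in>F1 \<union> F2. (if g \<in> F1 then c1 g * g else 0)) + (\<Sum>g\<in>F1 \<union> F2. (if g \<in> F2 then c2 g * g else 0))"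
    unfolding sum.distrib[symmetric] by (rule sum.cong) (auto simp: c_def distrib_right)
  also have "\<dots> = x + y" unfolding 1 2 using 1(2) 2(2)
    by (simp add: sum.If_cases Int_absorb1)
  finally have "x + y = (\<Sum>g\<in>F1 \<union> F2. c g * g)" by simp
  moreover have "\<forall>g\<in>F1 \<union> F2. c g \<in> poly_ring A" using 1 2 unfolding c_def by (auto intro!: pr_add)
  ultimately show "x + y \<in> ideal_gen A S" unfolding ideal_gen_def using 1 2 by blast
next
  fix r x :: "('a,'k) mpoly" assume r: "r \<in> poly_ring A" and "x \<in> ideal_gen A S"
  then obtain F c where 1: "x = (\<Sum>g\<in>F. c g * g)" "finite F" "F \<subseteq> S" "\<forall>g\<in>F. c g \<in> poly_ring A"
    unfolding ideal_gen_def by blast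
  have "r * x = (\<Sum>g\<in>F. (r * c g) * g)" unfolding 1 by (simp add: sum_distrib_left mult.assoc)
  moreover have "\<forall>g\<in>F. r * c g \<in> poly_ring A" using 1 r by (auto intro: pr_mult)
  ultimately show "r * x \<in> ideal_gen A S" unfolding ideal_gen_def
    by (intro CollectI exI[of _ F] exI[of _ "\<lambda>g. r * c g"]) (use 1 in auto)
qed



lemma pm_expansion: "p = (\<Sum>m\<in>Poly_Mapping.keys p. Poly_Mapping.single m (Poly_Mapping.lookup p m))"
proof (rule poly_mapping_eqI)
  fix k
  have "Poly_Mapping.lookup (\<Sum>m\<in>Poly_Mapping.keys p. Poly_Mapping.single m (Poly_Mapping.lookup p m)) k
     = (\<Sum>m\<in>Poly_Mapping.keys p. (if m = k then Poly_Mapping.lookup p m else 0))"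
    by (simp add: lookup_sum lookup_single when_def)
  also have "\<dots> = Poly_Mapping.lookup p k"
    by (simp add: sum.delta in_keys_iff)
  finally show "Poly_Mapping.lookup p k = Poly_Mapping.lookup (\<Sum>m\<in>Poly_Mapping.keys p. Poly_Mapping.single m (Poly_Mapping.lookup p m)) k"
    by simp
qed

lemma unique_max:
  fixes F G :: "('a \<Rightarrow>\<^sub>0 nat) set"
  assumes "finite F" "finite G" "F \<noteq> {}" "G \<noteq> {}"
  shows "\<exists>a\<in>F. \<exists>b\<in>G. \<forall>a'\<in>F. \<forall>b'\<in>G. a' + b' = a + b \<longrightarrow> a' = a \<and> b' = b"
proof -
  define Y where "Y = \<Union> (Poly_Mapping.keys ` (F \<union> G))"
  have "finite Y" unfolding Y_def using assms by auto
  then obtain h where h: "bij_betw h {0..<card Y} Y" using ex_bij_betw_nat_finite by blast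
  define N where "N = card Y"
  define f where "f m = (\<lambda>n. if n < N then Poly_Mapping.lookup m (h n) else 0)" for m :: "'a \<Rightarrow>\<^sub>0 nat"
  define \<mu> where "\<mu> m = Abs_poly_mapping (f m)" for m
  have fin: "finite {n. f m n \<noteq> 0}" for m
    by (rule finite_subset[of _ "{0..<N}"]) (auto simp: f_def split: if_splits)
  have lk: "Poly_Mapping.lookup (\<mu> m) = f m" for m unfolding \<mu>_def using fin by simp
  have add: "\<mu> (a + b) = \<mu> a + \<mu> b" for a b
    by (rule poly_mapping_eqI) (simp add: lk lookup_add f_def)
  have inj: "inj_on \<mu> (F \<union> G)"
  proof (rule inj_onI)
    fix a b assume ab: "a \<in> F \<union> G" "b \<in> F \<union> G" "\<mu> a = \<mu> b"
    show "a = b"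
    proof (rule poly_mapping_eqI)
      fix y
      show "Poly_Mapping.lookup a y = Poly_Mapping.lookup b y"
      proof (cases "y \<in> Y")
        case True
        then obtain n where n: "n < N" "y = h n" using h unfolding N_def bij_betw_def by (metis atLeastLessThan_iff imageE)
        have "f a = f b" using lk[of a] lk[of b] ab(3) by simp
        then have "f a n = f b n" by simp
        then show ?thesis using n by (simp add: f_def)
      next
        case False
        have "Poly_Mapping.keys a \<subseteq> Y" "Poly_Mapping.keys b \<subseteq> Y" using ab(1,2) unfolding Y_def by blast+
        then have "y \<notin> Poly_Mapping.keys a" "y \<notin> Poly_Mapping.keys b" using False by blast+
        then show ?thesis by (simp add: in_keys_iff)
      qed
    qed
  qed
  have "Max (\<mu> ` F) \<in> \<mu> ` F" by (rule Max_in) (use assms in auto)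
  then obtain a where a: "a \<in> F" "\<mu> a = Max (\<mu> ` F)" by (metis imageE)
  have "Max (\<mu> ` G) \<in> \<mu> ` G" by (rule Max_in) (use assms in auto)
  then obtain b where b: "b \<in> G" "\<mu> b = Max (\<mu> ` G)" by (metis imageE)
  have "\<forall>a'\<in>F. \<forall>b'\<in>G. a' + b' = a + b \<longrightarrow> a' = a \<and> b' = b"
  proof (intro ballI impI)
    fix a' b' assume a': "a' \<in> F" and b': "b' \<in> G" and e: "a' + b' = a + b"
    have le1: "\<mu> a' \<le> \<mu> a" using a a' assms by simp
    have le2: "\<mu> b' \<le> \<mu> b" using b b' assms by simp
    have s: "\<mu> a' + \<mu> b' = \<mu> a + \<mu> b" using e add by metis
    have "\<mu> a' = \<mu> a"
    proof (rule ccontr)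
      assume "\<mu> a' \<noteq> \<mu> a"
      then have "\<mu> a' < \<mu> a" using le1 by simp
      then have "\<mu> a' + \<mu> b' < \<mu> a + \<mu> b" using le2 by (rule add_less_le_mono)
      then show False using s by simp
    qed
    then have "a' = a" using inj_onD[OF inj _ UnI1[OF a'] UnI1[OF a(1)]] by blast
    then show "a' = a \<and> b' = b" using e by simp
  qed
  then show ?thesis using a b by blast
qed

lemma lookup_mult_unique:
  fixes f g :: "('a, 'k::comm_ring_1) mpoly"
  assumes a: "a \<in> Poly_Mapping.keys f" and b: "b \<in> Poly_Mapping.keys g"
    and u: "\<forall>a'\<in>Poly_Mapping.keys f. \<forall>b'\<in>Poly_Mapping.keys g. a' + b' = a + b \<longrightarrow> a' = a \<and> b' = b"
  shows "Poly_Mapping.lookup (f * g) (a + b) = Poly_Mapping.lookup f a * Poly_Mapping.lookup g b"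
proof -
  have "f * g = (\<Sum>m\<in>Poly_Mapping.keys f. Poly_Mapping.single m (Poly_Mapping.lookup f m)) *
     (\<Sum>m\<in>Poly_Mapping.keys g. Poly_Mapping.single m (Poly_Mapping.lookup g m))"
    using pm_expansion[of f] pm_expansion[of g] by simp
  also have "\<dots> = (\<Sum>p\<in>Poly_Mapping.keys f \<times> Poly_Mapping.keys g.
      Poly_Mapping.single (fst p + snd p) (Poly_Mapping.lookup f (fst p) * Poly_Mapping.lookup g (snd p)))"
    by (simp add: sum_product sum.cartesian_product mult_single case_prod_beta)
  finally have eq: "f * g = (\<Sum>p\<in>Poly_Mapping.keys f \<times> Poly_Mapping.keys g.
      Poly_Mapping.single (fst p + snd p) (Poly_Mapping.lookup f (fst p) * Poly_Mapping.lookup g (snd p)))" .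
  have "Poly_Mapping.lookup (f * g) (a + b) = (\<Sum>p\<in>Poly_Mapping.keys f \<times> Poly_Mapping.keys g.
      (if fst p + snd p = a + b then Poly_Mapping.lookup f (fst p) * Poly_Mapping.lookup g (snd p) else 0))"
    unfolding eq by (simp add: lookup_sum lookup_single when_def)
  also have "\<dots> = (\<Sum>p\<in>Poly_Mapping.keys f \<times> Poly_Mapping.keys g.
      (if p = (a, b) then Poly_Mapping.lookup f a * Poly_Mapping.lookup g b else 0))"
  proof (rule sum.cong)
    fix p assume "p \<in> Poly_Mapping.keys f \<times> Poly_Mapping.keys g"
    then show "(if fst p + snd p = a + b then Poly_Mapping.lookup f (fst p) * Poly_Mapping.lookup g (snd p) else 0) =
      (if p = (a, b) then Poly_Mapping.lookup f a * Poly_Mapping.lookup g b else 0)"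
      using u by (cases p) auto
  qed simp
  also have "\<dots> = Poly_Mapping.lookup f a * Poly_Mapping.lookup g b"
    using a b by simp
  finally show ?thesis .
qed

definition mon_ideal :: "'a set \<Rightarrow> 'a set \<Rightarrow> ('a, 'k::comm_ring_1) mpoly set" where
  "mon_ideal A T = {p \<in> poly_ring A. \<forall>m\<in>Poly_Mapping.keys p. \<exists>t\<in>T. Poly_Mapping.lookup m t \<noteq> 0}"

lemma mon_ideal_is_ideal: "is_ideal A (mon_ideal A T :: ('a,'k::comm_ring_1) mpoly set)"
  unfolding is_ideal_def
proof (intro conjI ballI)
  show "mon_ideal A T \<subseteq> poly_ring A" unfolding mon_ideal_def by auto
  show "0 \<in> mon_ideal A T" unfolding mon_ideal_def by auto
next
  fix x y :: "('a,'k) mpoly" assume "x \<in> mon_ideal A T" "y \<in> mon_ideal A T"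
  then show "x + y \<in> mon_ideal A T" unfolding mon_ideal_def using keys_add[of x y]
    by (auto intro: pr_add)
next
  fix r x :: "('a,'k) mpoly" assume r: "r \<in> poly_ring A" and x: "x \<in> mon_ideal A T"
  have "\<exists>t\<in>T. Poly_Mapping.lookup m t \<noteq> 0" if m: "m \<in> Poly_Mapping.keys (r * x)" for m
  proof -
    obtain a b where ab: "a \<in> Poly_Mapping.keys r" "b \<in> Poly_Mapping.keys x" "m = a + b"
      using keys_mult[of r x] m by blast
    obtain t where "t \<in> T" "Poly_Mapping.lookup b t \<noteq> 0" using x ab unfolding mon_ideal_def by blast
    then show ?thesis using ab by (auto simp: lookup_add)
  qed
  then show "r * x \<in> mon_ideal A T" using r x unfolding mon_ideal_def by (auto intro: pr_mult)
qed

lemma Var_in_mon_ideal: "t \<in> T \<Longrightarrow> t \<in> A \<Longrightarrow> Var t \<in> mon_ideal A T"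
  unfolding mon_ideal_def Var_def poly_ring_def vars_def by (auto intro!: bexI[of _ t])

lemma Var_notin_mon_ideal: "t \<notin> T \<Longrightarrow> Var t \<notin> mon_ideal A T"
  unfolding mon_ideal_def Var_def by (auto simp: lookup_single when_def)

lemma one_notin_mon_ideal: "1 \<notin> mon_ideal A T"
  unfolding mon_ideal_def by auto

lemma mon_ideal_eq:
  fixes T :: "'a set"
  assumes "T \<subseteq> A"
  shows "ideal_gen A {Var t |t. t \<in> T} = (mon_ideal A T :: ('a,'k::comm_ring_1) mpoly set)"
proof
  show "ideal_gen A {Var t |t. t \<in> T} \<subseteq> (mon_ideal A T :: ('a,'k) mpoly set)"
    using assms by (intro ideal_gen_least mon_ideal_is_ideal) (auto intro: Var_in_mon_ideal)
next
  have SI: "{Var t |t. t \<in> T} \<subseteq> (poly_ring A :: ('a,'k) mpoly set)" using assms by (auto intro: pr_Var)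
  note I = ideal_gen_is_ideal[OF SI]
  show "(mon_ideal A T :: ('a,'k) mpoly set) \<subseteq> ideal_gen A {Var t |t. t \<in> T}"
  proof
    fix p :: "('a,'k) mpoly" assume p: "p \<in> mon_ideal A T"
    have "Poly_Mapping.single m (Poly_Mapping.lookup p m) \<in> ideal_gen A {Var t |t. t \<in> T}"
      if m: "m \<in> Poly_Mapping.keys p" for m
    proof -
      obtain t where t: "t \<in> T" "Poly_Mapping.lookup m t \<noteq> 0" using p m unfolding mon_ideal_def by blast
      define m' where "m' = m - Poly_Mapping.single t 1"
      have mm: "m' + Poly_Mapping.single t 1 = m"
        using t by (intro poly_mapping_eqI) (auto simp: m'_def lookup_add lookup_minus lookup_single when_def)
      have km: "Poly_Mapping.keys m' \<subseteq> Poly_Mapping.keys m"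
        by (auto simp: m'_def in_keys_iff lookup_minus)
      have "Poly_Mapping.keys m \<subseteq> A" using p m unfolding mon_ideal_def poly_ring_def vars_def by auto
      then have c: "Poly_Mapping.single m' (Poly_Mapping.lookup p m) \<in> poly_ring A"
        using vars_single[of m' "Poly_Mapping.lookup p m"] km unfolding poly_ring_def by auto
      have "Poly_Mapping.single m (Poly_Mapping.lookup p m) = Poly_Mapping.single m' (Poly_Mapping.lookup p m) * Var t"
        unfolding Var_def mult_single mm by simp
      moreover have "Var t \<in> ideal_gen A {Var t |t. t \<in> T}" using t by (intro ideal_gen_sub) auto
      ultimately show ?thesis using ideal_mult[OF I c] by simp
    qed
    then have "(\<Sum>m\<in>Poly_Mapping.keys p. Poly_Mapping.single m (Poly_Mapping.lookup p m)) \<in> ideal_gen A {Var t |t. t \<in> T}"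
      by (intro ideal_sum[OF I])
    then show "p \<in> ideal_gen A {Var t |t. t \<in> T}" using pm_expansion[of p] by simp
  qed
qed

lemma mon_ideal_prime:
  fixes T :: "'a set"
  shows "prime_ideal A (mon_ideal A T :: ('a,'k::field) mpoly set)"
  unfolding prime_ideal_def
proof (intro conjI ballI impI)
  show "is_ideal A (mon_ideal A T :: ('a,'k) mpoly set)" by (rule mon_ideal_is_ideal)
  show "(mon_ideal A T :: ('a,'k) mpoly set) \<noteq> poly_ring A" using one_notin_mon_ideal pr_one by blast
next
  fix a b :: "('a,'k) mpoly"
  assume a: "a \<in> poly_ring A" and b: "b \<in> poly_ring A" and ab: "a * b \<in> mon_ideal A T"
  show "a \<in> mon_ideal A T \<or> b \<in> mon_ideal A T"
  proof (rule ccontr)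
    assume "\<not> ?thesis"
    then have na: "a \<notin> mon_ideal A T" and nb: "b \<notin> mon_ideal A T" by auto
    define F where "F = {m \<in> Poly_Mapping.keys a. \<forall>t\<in>T. Poly_Mapping.lookup m t = 0}"
    define G where "G = {m \<in> Poly_Mapping.keys b. \<forall>t\<in>T. Poly_Mapping.lookup m t = 0}"
    have "F \<noteq> {}" using na a unfolding F_def mon_ideal_def by auto
    moreover have "G \<noteq> {}" using nb b unfolding G_def mon_ideal_def by auto
    moreover have "finite F" "finite G" unfolding F_def G_def by auto
    ultimately obtain a0 b0 where a0: "a0 \<in> F" and b0: "b0 \<in> G"
      and u: "\<forall>a'\<in>F. \<forall>b'\<in>G. a' + b' = a0 + b0 \<longrightarrow> a' = a0 \<and> b' = b0"
      using unique_max[of F G] by blast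
    have u2: "\<forall>a'\<in>Poly_Mapping.keys a. \<forall>b'\<in>Poly_Mapping.keys b. a' + b' = a0 + b0 \<longrightarrow> a' = a0 \<and> b' = b0"
    proof (intro ballI impI)
      fix a' b' assume a': "a' \<in> Poly_Mapping.keys a" and b': "b' \<in> Poly_Mapping.keys b" and e: "a' + b' = a0 + b0"
      have "\<forall>t\<in>T. Poly_Mapping.lookup (a' + b') t = 0" using a0 b0 unfolding e F_def G_def by (simp add: lookup_add)
      then have "a' \<in> F" "b' \<in> G" using a' b' unfolding F_def G_def by (auto simp: lookup_add)
      then show "a' = a0 \<and> b' = b0" using u e by blast
    qed
    have "Poly_Mapping.lookup (a * b) (a0 + b0) = Poly_Mapping.lookup a a0 * Poly_Mapping.lookup b b0"
      using a0 b0 u2 unfolding F_def G_def by (intro lookup_mult_unique) auto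
    also have "\<dots> \<noteq> 0" using a0 b0 unfolding F_def G_def by (auto simp: in_keys_iff)
    finally have "a0 + b0 \<in> Poly_Mapping.keys (a * b)" by (simp add: in_keys_iff)
    moreover have "\<forall>t\<in>T. Poly_Mapping.lookup (a0 + b0) t = 0" using a0 b0 unfolding F_def G_def by (simp add: lookup_add)
    ultimately show False using ab unfolding mon_ideal_def by auto
  qed
qed



definition jX :: "nat \<Rightarrow> 'a \<Rightarrow> ('a \<times> nat, 'k::comm_ring_1) mpoly poly" where
  "jX s v = (\<Sum>l\<le>s. monom (Var (v, l)) l)"

lemma coeff_jX: "coeff (jX s v) i = (if i \<le> s then Var (v, i) else 0)"
  unfolding jX_def by (simp add: coeff_sum coeff_monom)

lemma jet_subst_edge:
  assumes "x \<noteq> y"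
  shows "jet_subst s (Var x * Var y :: ('a,'k::comm_ring_1) mpoly) = jX s x * jX s y"
proof -
  define m where "m = Poly_Mapping.single x (1::nat) + Poly_Mapping.single y 1"
  have vv: "(Var x * Var y :: ('a,'k) mpoly) = Poly_Mapping.single m 1"
    unfolding Var_def m_def by (simp add: mult_single)
  have km: "Poly_Mapping.keys m = {x, y}"
    using assms by (auto simp: m_def in_keys_iff lookup_add lookup_single when_def split: if_splits)
  have lx: "Poly_Mapping.lookup m x = 1" and ly: "Poly_Mapping.lookup m y = 1"
    using assms by (auto simp: m_def lookup_add lookup_single when_def)
  have c1: "(Const 1 :: ('a \<times> nat,'k) mpoly) = 1" unfolding Const_def by simp
  show ?thesis
    unfolding jet_subst_def vv using assms
    by (simp add: km lx ly c1 jX_def one_pCons[symmetric])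
qed

lemma coeff_edge:
  assumes "x \<noteq> y" "l \<le> s"
  shows "coeff (jet_subst s (Var x * Var y :: ('a,'k::comm_ring_1) mpoly)) l = (\<Sum>i\<le>l. Var (x, i) * Var (y, l - i))"
  unfolding jet_subst_edge[OF assms(1)] coeff_mult using assms(2)
  by (intro sum.cong) (auto simp: coeff_jX)



definition jgen :: "'a \<Rightarrow> 'a \<Rightarrow> nat \<Rightarrow> ('a \<times> nat, 'k::comm_ring_1) mpoly" where
  "jgen x y l = (\<Sum>i\<le>l. Var (x, i) * Var (y, l - i))"

lemma jgen_split: "jgen x y j = (\<Sum>i<j. Var (x, i) * Var (y, j - i)) + Var (x, j) * Var (y, 0)"
  unfolding jgen_def lessThan_Suc_atMost[symmetric] by simp

lemma prod_notin:
  assumes "prime_ideal A P" "1 \<notin> P" "\<And>i. i \<in> F \<Longrightarrow> f i \<in> poly_ring A - P"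
  shows "prod f F \<in> poly_ring A - P"
  using assms(3)
proof (induction F rule: infinite_finite_induct)
  case (insert x F)
  then have "f x \<in> poly_ring A - P" "prod f F \<in> poly_ring A - P" by auto
  then show ?case using insert(1,2) assms(1) unfolding prime_ideal_def by (auto intro: pr_mult)
qed (use assms in auto)

lemma power_notin:
  assumes "prime_ideal A P" "1 \<notin> P" "b \<in> poly_ring A - P"
  shows "b ^ n \<in> poly_ring A - P"
  using prod_notin[OF assms(1,2), of "{..<n}" "\<lambda>_. b"] assms(3) by simp

theorem mainTheorem4:
  fixes V :: "'v set" and E :: "'v set set" and W :: "'v set" and s :: nat
  assumes "simple_graph V E" and "connected_graph V E" and "E \<noteq> {}"
    and "minimal_vertex_cover V E W"
  defines "J \<equiv> jet_ideal s V (edge_ideal_gens E :: ('v, 'k::field) mpoly set)"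
    and "P \<equiv> ideal_gen (jet_vars s V) (jet_set s W :: ('v \<times> nat, 'k) mpoly set)"
  shows "minimal_prime (jet_vars s V) J P \<and> primary_component (jet_vars s V) J P = P"
proof -
  define A where "A = jet_vars s V"
  define TW where "TW = W \<times> {0..s}"
  have WV: "W \<subseteq> V" using assms(4) unfolding minimal_vertex_cover_def vertex_cover_def by auto
  have finW: "finite W" using WV assms(1) unfolding simple_graph_def by (auto intro: finite_subset)
  have edgeV: "x \<in> V" "y \<in> V" if "{x, y} \<in> E" for x y
    using that assms(1) unfolding simple_graph_def by auto
  have cover: "x \<in> W \<or> y \<in> W" if "{x, y} \<in> E" for x y
  proof -
    have "\<forall>e\<in>E. e \<inter> W \<noteq> {}" using assms(4) unfolding minimal_vertex_cover_def vertex_cover_def by simp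
    then have "{x, y} \<inter> W \<noteq> {}" using that by (rule bspec)
    then show ?thesis by auto
  qed
  have TWA: "TW \<subseteq> A" unfolding TW_def A_def jet_vars_def using WV by auto
  have js: "jet_set s W = {Var t |t. t \<in> TW}" unfolding jet_set_def TW_def by auto
  have PM: "P = (mon_ideal A TW :: ('v \<times> nat, 'k) mpoly set)"
    unfolding P_def js A_def[symmetric] using mon_ideal_eq[OF TWA] by simp
  have Pprime: "prime_ideal A P" unfolding PM by (rule mon_ideal_prime)
  have Pideal: "is_ideal A P" unfolding PM by (rule mon_ideal_is_ideal)
  have P1: "(1 :: ('v \<times> nat, 'k) mpoly) \<notin> P" unfolding PM by (rule one_notin_mon_ideal)
  have VarA: "Var (x, i) \<in> (poly_ring A :: ('v \<times> nat, 'k) mpoly set)" if "x \<in> V" "i \<le> s" for x i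
    using that unfolding A_def jet_vars_def by (intro pr_Var) auto
  define SJ where "SJ = {coeff (jet_subst s f) l | f l. f \<in> (edge_ideal_gens E :: ('v, 'k) mpoly set) \<and> l \<le> s}"
  have SJ_form: "\<exists>x y l. g = jgen x y l \<and> {x, y} \<in> E \<and> x \<noteq> y \<and> l \<le> s" if gS: "g \<in> SJ" for g
  proof -
    obtain f l where fl: "g = coeff (jet_subst s f) l" "f \<in> edge_ideal_gens E" "l \<le> s"
      using gS unfolding SJ_def by blast
    then obtain x y where xy: "f = Var x * Var y" "{x, y} \<in> E" "x \<noteq> y"
      unfolding edge_ideal_gens_def by blast
    have "g = jgen x y l" unfolding fl(1) xy(1) jgen_def using coeff_edge[OF xy(3) fl(3)] by simp
    then show ?thesis using xy fl by blast
  qed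
  have jgen_SJ: "jgen x y l \<in> SJ" if "{x, y} \<in> E" "x \<noteq> y" "l \<le> s" for x y l
  proof -
    have "Var x * Var y \<in> (edge_ideal_gens E :: ('v, 'k) mpoly set)"
      unfolding edge_ideal_gens_def using that by blast
    moreover have "(jgen x y l :: ('v \<times> nat, 'k) mpoly) = coeff (jet_subst s (Var x * Var y :: ('v, 'k) mpoly)) l"
      unfolding jgen_def by (rule coeff_edge[OF that(2,3), symmetric])
    ultimately show ?thesis unfolding SJ_def using that(3) by blast
  qed
  have jgenA: "(jgen x y l :: ('v \<times> nat, 'k) mpoly) \<in> poly_ring A" if "x \<in> V" "y \<in> V" "l \<le> s" for x y l
    unfolding jgen_def using that by (auto intro!: pr_sum pr_mult VarA)
  have SJA: "SJ \<subseteq> poly_ring A" using SJ_form jgenA edgeV by blast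
  have JSJ: "J = ideal_gen A SJ" unfolding J_def jet_ideal_def SJ_def A_def by simp
  have Jideal: "is_ideal A J" unfolding JSJ by (rule ideal_gen_is_ideal[OF SJA])
  have jgenJ: "jgen x y l \<in> J" if "{x, y} \<in> E" "x \<noteq> y" "l \<le> s" for x y l
    unfolding JSJ by (rule ideal_gen_sub[OF jgen_SJ[OF that]])
  have VarP: "Var (w, j) \<in> P" if "w \<in> W" "j \<le> s" for w j
    unfolding PM using that TWA by (intro Var_in_mon_ideal) (auto simp: TW_def)
  have JP: "J \<subseteq> P"
    unfolding JSJ
  proof (rule ideal_gen_least[OF Pideal], rule subsetI)
    fix g assume "g \<in> SJ"
    then obtain x y l where g: "g = jgen x y l" "{x, y} \<in> E" "x \<noteq> y" "l \<le> s" using SJ_form by blast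
    have "Var (x, i) * Var (y, l - i) \<in> P" if "i \<le> l" for i
    proof (cases "x \<in> W")
      case True
      then show ?thesis using that g edgeV[OF g(2)] by (intro ideal_mult2[OF Pideal] VarA VarP) auto
    next
      case False
      then have "y \<in> W" using cover[OF g(2)] by simp
      then show ?thesis using that g edgeV[OF g(2)] by (intro ideal_mult[OF Pideal] VarA VarP) auto
    qed
    then show "g \<in> P" unfolding g(1) jgen_def by (intro ideal_sum[OF Pideal]) auto
  qed
  have nbr: "\<exists>y. {w, y} \<in> E \<and> w \<noteq> y \<and> y \<notin> W" if w: "w \<in> W" for w
  proof -
    have "\<not> vertex_cover V E (W - {w})" using assms(4) w unfolding minimal_vertex_cover_def by blast
    then obtain e where e: "e \<in> E" "e \<inter> (W - {w}) = {}" using WV unfolding vertex_cover_def by blast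
    have "e \<inter> W \<noteq> {}" using e(1) assms(4) unfolding minimal_vertex_cover_def vertex_cover_def by blast
    then have we: "w \<in> e" using e(2) by blast
    have "card e = 2" using e(1) assms(1) unfolding simple_graph_def by blast
    then obtain a b where ab: "e = {a, b}" "a \<noteq> b" by (meson card_2_iff)
    show ?thesis
    proof (cases "a = w")
      case True
      then show ?thesis using ab e by (intro exI[of _ b]) auto
    next
      case False
      then have "b = w" using we ab by auto
      then show ?thesis using ab e False by (intro exI[of _ a]) (auto simp: insert_commute)
    qed
  qed
  have minimal: "Q = P" if Q: "prime_ideal A Q" "J \<subseteq> Q" "Q \<subseteq> P" for Q
  proof
    show "Q \<subseteq> P" by (rule Q(3))
    have Qideal: "is_ideal A Q" using Q(1) unfolding prime_ideal_def by blast
    have "Var (w, j) \<in> Q" if w: "w \<in> W" and j: "j \<le> s" for w j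
    proof -
      obtain y where y: "{w, y} \<in> E" "w \<noteq> y" "y \<notin> W" using nbr[OF w] by blast
      have yV: "y \<in> V" "w \<in> V" using edgeV[OF y(1)] by auto
      have "Var (y, 0) \<notin> P" unfolding PM using y(3) by (intro Var_notin_mon_ideal) (auto simp: TW_def)
      then have y0: "Var (y, 0) \<notin> Q" using Q(3) by blast
      show ?thesis using j
      proof (induction j rule: less_induct)
        case (less j)
        have R: "(\<Sum>i<j. Var (w, i) * Var (y, j - i)) \<in> Q"
          using less yV by (intro ideal_sum[OF Qideal] ideal_mult2[OF Qideal] VarA) auto
        have "jgen w y j \<in> Q" using jgenJ[OF y(1,2) less(2)] Q(2) by blast
        then have "jgen w y j - (\<Sum>i<j. Var (w, i) * Var (y, j - i)) \<in> Q" using R by (rule ideal_diff[OF Qideal])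
        then have "Var (w, j) * Var (y, 0) \<in> Q" unfolding jgen_split by simp
        then show ?case using Q(1) y0 yV less(2) VarA unfolding prime_ideal_def by blast
      qed
    qed
    then have "jet_set s W \<subseteq> Q" unfolding jet_set_def by blast
    then show "P \<subseteq> Q" unfolding P_def A_def[symmetric] by (rule ideal_gen_least[OF Qideal])
  qed
  have MP: "minimal_prime A J P"
    unfolding minimal_prime_def using Pprime JP minimal by blast
  obtain nb where nb: "\<And>w. w \<in> W \<Longrightarrow> {w, nb w} \<in> E \<and> w \<noteq> nb w \<and> nb w \<notin> W"
    using nbr by metis
  have K: "Var (nb w, 0) ^ Suc j * Var (w, j) \<in> J" if w: "w \<in> W" and j: "j \<le> s" for w j
    using j
  proof (induction j rule: less_induct)
    case (less j)
    define y where "y = nb w"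
    define b where "b = (Var (y, 0) :: ('v \<times> nat, 'k) mpoly)"
    have y: "{w, y} \<in> E" "w \<noteq> y" using nb[OF w] unfolding y_def by auto
    have yV: "y \<in> V" "w \<in> V" using edgeV[OF y(1)] by auto
    have bA: "b \<in> poly_ring A" unfolding b_def using yV by (intro VarA) auto
    have tm: "b ^ j * (Var (w, i) * Var (y, j - i)) \<in> J" if i: "i < j" for i
    proof -
      have "b ^ j * (Var (w, i) * Var (y, j - i)) = (b ^ (j - Suc i) * Var (y, j - i)) * (b ^ Suc i * Var (w, i))"
      proof -
        have "b ^ j = b ^ (j - Suc i) * b ^ Suc i"
          unfolding power_add[symmetric] using i by simp
        then show ?thesis by (simp add: algebra_simps)
      qed
      moreover have "b ^ Suc i * Var (w, i) \<in> J" using less(1)[of i] i less(2) unfolding b_def y_def by simp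
      moreover have "b ^ (j - Suc i) * Var (y, j - i) \<in> poly_ring A" using bA yV less(2)
        by (intro pr_mult pr_power VarA) auto
      ultimately show ?thesis by (simp add: ideal_mult[OF Jideal])
    qed
    have "b ^ j * (\<Sum>i<j. Var (w, i) * Var (y, j - i)) \<in> J"
      unfolding sum_distrib_left using tm by (intro ideal_sum[OF Jideal]) auto
    moreover have "b ^ j * jgen w y j \<in> J" using jgenJ[OF y less(2)] bA by (intro ideal_mult[OF Jideal] pr_power)
    ultimately have "b ^ j * jgen w y j - b ^ j * (\<Sum>i<j. Var (w, i) * Var (y, j - i)) \<in> J"
      by (intro ideal_diff[OF Jideal])
    then have "b ^ j * (Var (w, j) * b) \<in> J" unfolding jgen_split b_def by (simp add: algebra_simps)
    then show ?case unfolding b_def y_def by (simp add: algebra_simps)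
  qed
  define G where "G = (\<Prod>w\<in>W. Var (nb w, 0) ^ Suc s :: ('v \<times> nat, 'k) mpoly)"
  have nbA: "Var (nb w, 0) \<in> poly_ring A - P" if "w \<in> W" for w
  proof -
    have "{w, nb w} \<in> E" "nb w \<notin> W" using nb[OF that] by auto
    then have "nb w \<in> V" "(nb w, 0) \<notin> TW" using edgeV by (auto simp: TW_def)
    then show ?thesis unfolding PM using VarA[of "nb w" 0] Var_notin_mon_ideal[of "(nb w, 0)" TW A] by auto
  qed
  have GA: "G \<in> poly_ring A - P" unfolding G_def
    using nbA by (intro prod_notin[OF Pprime P1] power_notin[OF Pprime P1]) auto
  have GV: "G * Var (w, j) \<in> J" if w: "w \<in> W" and j: "j \<le> s" for w j
  proof -
    have "G = Var (nb w, 0) ^ Suc s * (\<Prod>w\<in>W - {w}. Var (nb w, 0) ^ Suc s)"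
      unfolding G_def using finW w by (simp add: prod.remove)
    also have "Var (nb w, 0) ^ Suc s = Var (nb w, 0) ^ (s - j) * Var (nb w, 0) ^ Suc j"
      unfolding power_add[symmetric] using j by (simp del: power_Suc)
    finally have "G * Var (w, j) = (Var (nb w, 0) ^ (s - j) * (\<Prod>w\<in>W - {w}. Var (nb w, 0) ^ Suc s)) * (Var (nb w, 0) ^ Suc j * Var (w, j))"
      by (simp add: algebra_simps)
    moreover have "Var (nb w, 0) ^ (s - j) * (\<Prod>w\<in>W - {w}. Var (nb w, 0) ^ Suc s) \<in> (poly_ring A :: ('v \<times> nat, 'k) mpoly set)"
      using nbA w by (intro pr_mult pr_power pr_prod) auto
    ultimately show ?thesis using K[OF w j] by (simp add: ideal_mult[OF Jideal])
  qed
  have PC: "primary_component A J P = P"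
  proof
    show "primary_component A J P \<subseteq> P"
    proof
      fix f assume "f \<in> primary_component A J P"
      then obtain g where f: "f \<in> poly_ring A" "g \<in> poly_ring A - P" "g * f \<in> J"
        unfolding primary_component_def by blast
      then show "f \<in> P" using JP Pprime unfolding prime_ideal_def by blast
    qed
  next
    show "P \<subseteq> primary_component A J P"
    proof
      fix f assume fP: "f \<in> P"
      then obtain F c where F: "f = (\<Sum>g\<in>F. c g * g)" "finite F" "F \<subseteq> jet_set s W" "\<forall>g\<in>F. c g \<in> poly_ring A"
        unfolding P_def ideal_gen_def A_def by blast
      have "G * g \<in> J" if gF: "g \<in> F" for g
      proof -
        obtain w j where "g = Var (w, j)" "w \<in> W" "j \<le> s" using F(3) gF unfolding jet_set_def by blast
        then show ?thesis using GV by simp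
      qed
      then have "(\<Sum>g\<in>F. c g * (G * g)) \<in> J"
      proof (intro ideal_sum[OF Jideal])
        fix g assume "g \<in> F" and h: "\<And>g. g \<in> F \<Longrightarrow> G * g \<in> J"
        then show "c g * (G * g) \<in> J" using F(4) ideal_mult[OF Jideal, of "c g" "G * g"] by blast
      qed
      moreover have "G * f = (\<Sum>g\<in>F. c g * (G * g))" unfolding F(1) by (simp add: sum_distrib_left algebra_simps)
      ultimately have "G * f \<in> J" by simp
      moreover have "f \<in> poly_ring A" using fP Pideal unfolding is_ideal_def by blast
      ultimately show "f \<in> primary_component A J P" unfolding primary_component_def using GA by blast
    qed
  qed
  show ?thesis using MP PC unfolding A_def by simp
qed

end
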